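(* Let $\Gamma$ be any cocompact lattice in the Lie group $\mathrm{Sol}^3$. Then $\Gamma$ is not presentable by a product.
   Context: $\mathrm{Sol}^3$ denotes the solvable Lie group $\mathbb{R}^2\rtimes\mathbb{R}$, where $t\in\mathbb{R}$ acts on $\mathbb{R}^2$ by the matrix $\mathrm{diag}(e^t,e^{-t})$ (the Thurston geometry $\mathrm{Sol}^3$). An infinite group $\Gamma$ is not presentable by a product if for every homomorphism $\varphi\colon \Gamma_1\times\Gamma_2\to\Gamma$ whose image has finite index in $\Gamma$, at least one of $\varphi(\Gamma_1)$, $\varphi(\Gamma_2)$ is finite. *)

theory Defs
  imports "HOL-Analysis.Analysis" "HOL-Algebra.Algebra"
begin

text \<open>The Lie group Sol^3 = R^2 semidirect R, t acting by diag(e^t, e^-t).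
  An element (x, y, t) stands for ((x,y), t); the underlying topology is the
  standard (product) topology on real * real * real.\<close>

definition sol_mult :: "real \<times> real \<times> real \<Rightarrow> real \<times> real \<times> real \<Rightarrow> real \<times> real \<times> real" where
  "sol_mult p q = (case p of (x, y, t) \<Rightarrow> case q of (x', y', t') \<Rightarrow>
      (x + exp t * x', y + exp (- t) * y', t + t'))"

definition Sol3 :: "(real \<times> real \<times> real) monoid" where
  "Sol3 = \<lparr>carrier = UNIV, mult = sol_mult, one = (0, 0, 0)\<rparr>"

text \<open>A cocompact lattice: a discrete subgroup whose quotient Sol3/Gamma is compact,
  i.e. there is a compact K whose Gamma-translates cover the group.\<close>

definition cocompact_lattice :: "(real \<times> real \<times> real) set \<Rightarrow> bool" where
  "cocompact_lattice L \<longleftrightarrow> subgroup L Sol3 \<and> discrete L \<and>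
     (\<exists>K. compact K \<and> (\<Union>g\<in>L. sol_mult g ` K) = UNIV)"

definition finite_index :: "('a, 'm) monoid_scheme \<Rightarrow> 'a set \<Rightarrow> bool" where
  "finite_index G H \<longleftrightarrow> finite (rcosets\<^bsub>G\<^esub> H)"

end

theory Submission
  imports Defs
begin

lemma sm: "sol_mult (x, y, t) (x', y', t') = (x + exp t * x', y + exp (- t) * y', t + t')"
  by (simp add: sol_mult_def)

lemma sm_assoc: "sol_mult (sol_mult a b) c = sol_mult a (sol_mult b c)"
  by (cases a; cases b; cases c) (simp add: sm algebra_simps exp_add exp_diff exp_minus_inverse field_simps)

lemma sm_t: "snd (snd (sol_mult a b)) = snd (snd a) + snd (snd b)"
  by (cases a; cases b) (simp add: sm)

lemma sm_cont: "continuous_on UNIV (sol_mult a)"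
proof -
  obtain x y t where a: "a = (x,y,t)" by (cases a) auto
  have "sol_mult a = (\<lambda>q. (x + exp t * fst q, y + exp (- t) * fst (snd q), t + snd (snd q)))"
    by (auto simp: a sol_mult_def fun_eq_iff split: prod.splits)
  then show ?thesis by (simp add: continuous_intros)
qed

lemma sm_idem: "sol_mult u u = u \<Longrightarrow> u = (0,0,0)"
  by (cases u) (auto simp: sm)

lemma bnd:
  fixes K :: "(real \<times> real \<times> real) set"
  assumes "compact K"
  obtains B where "B > 0" "\<And>k1 k2 k3. (k1,k2,k3) \<in> K \<Longrightarrow> \<bar>k1\<bar> \<le> B \<and> \<bar>k2\<bar> \<le> B \<and> \<bar>k3\<bar> \<le> B"
proof -
  obtain B where B: "B > 0" "\<And>k. k \<in> K \<Longrightarrow> norm k \<le> B"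
    using compact_imp_bounded[OF assms] bounded_pos by metis
  show ?thesis
  proof (rule that[OF B(1)])
    fix k1 k2 k3 assume "(k1,k2,k3) \<in> K"
    then have n: "norm (k1,k2,k3) \<le> B" using B by auto
    have "norm k1 \<le> norm (k1,k2,k3)" by (rule norm_fst_le)
    moreover have "norm (k2,k3) \<le> norm (k1,k2,k3)" by (rule norm_snd_le)
    moreover have "norm k2 \<le> norm (k2,k3)" by (rule norm_fst_le)
    moreover have "norm k3 \<le> norm (k2,k3)" by (rule norm_snd_le)
    ultimately show "\<bar>k1\<bar> \<le> B \<and> \<bar>k2\<bar> \<le> B \<and> \<bar>k3\<bar> \<le> B" using n by auto
  qed
qed

lemma no_cover_N:
  assumes "compact K" "\<forall>h\<in>H. snd (snd h) = 0"
    and "\<forall>p. \<exists>h\<in>H. \<exists>k\<in>K. p = sol_mult h k"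
  shows False
proof -
  obtain B where B: "B > 0" "\<And>k1 k2 k3. (k1,k2,k3) \<in> K \<Longrightarrow> \<bar>k1\<bar> \<le> B \<and> \<bar>k2\<bar> \<le> B \<and> \<bar>k3\<bar> \<le> B"
    using bnd[OF assms(1)] by blast
  obtain h k where hk: "h \<in> H" "k \<in> K" "(0,0,B+1) = sol_mult h k" using assms(3) by blast
  obtain k1 k2 k3 where k: "k = (k1,k2,k3)" by (cases k) auto
  have "B + 1 = snd (snd h) + k3" using hk(3) sm_t[of h k] k by (metis snd_conv)
  then show False using assms(2) hk B(2)[of k1 k2 k3] k by auto
qed

lemma no_cover_C:
  assumes "compact K" "snd (snd a) \<noteq> 0" "\<forall>h\<in>H. sol_mult a h = sol_mult h a"
    and "\<forall>p. \<exists>h\<in>H. \<exists>k\<in>K. p = sol_mult h k"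
  shows False
proof -
  obtain B where B: "B > 0" "\<And>k1 k2 k3. (k1,k2,k3) \<in> K \<Longrightarrow> \<bar>k1\<bar> \<le> B \<and> \<bar>k2\<bar> \<le> B \<and> \<bar>k3\<bar> \<le> B"
    using bnd[OF assms(1)] by blast
  obtain xa ya ta where a: "a = (xa,ya,ta)" by (cases a) auto
  have ta: "ta \<noteq> 0" using assms(2) a by simp
  have d: "\<bar>1 - exp ta\<bar> > 0" using ta by simp
  define XX where "XX = \<bar>xa\<bar> * (1 + exp B) / \<bar>1 - exp ta\<bar> + exp B * B + 1"
  obtain h k where hk: "h \<in> H" "k \<in> K" "(XX,0,0) = sol_mult h k" using assms(4) by blast
  obtain k1 k2 k3 where k: "k = (k1,k2,k3)" by (cases k) auto
  obtain x' y' s where h: "h = (x',y',s)" by (cases h) auto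
  have kb: "\<bar>k1\<bar> \<le> B" "\<bar>k3\<bar> \<le> B" using B(2)[of k1 k2 k3] hk(2) k by auto
  have e1: "XX = x' + exp s * k1" and e3: "0 = s + k3" using hk(3) by (auto simp: h k sm)
  have sB: "\<bar>s\<bar> \<le> B" using e3 kb by auto
  have com: "xa + exp ta * x' = x' + exp s * xa" using assms(3) hk(1) by (auto simp: a h sm)
  have c2: "x' * (1 - exp ta) = xa * (1 - exp s)" using com by (simp add: algebra_simps)
  have es: "exp s \<le> exp B" using sB by simp
  have "\<bar>1 - exp s\<bar> \<le> 1 + exp B" using es exp_gt_zero[of s] exp_gt_zero[of B] unfolding abs_le_iff by linarith
  then have "\<bar>x'\<bar> * \<bar>1 - exp ta\<bar> \<le> \<bar>xa\<bar> * (1 + exp B)"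
    using c2 by (metis abs_mult abs_ge_zero mult_left_mono)
  then have x'b: "\<bar>x'\<bar> \<le> \<bar>xa\<bar> * (1 + exp B) / \<bar>1 - exp ta\<bar>"
    using d by (simp add: pos_le_divide_eq)
  have "exp s * k1 \<le> exp B * B"
  proof -
    have "exp s * k1 \<le> exp s * \<bar>k1\<bar>" by simp
    also have "\<dots> \<le> exp B * B" using es kb(1) by (intro mult_mono) auto
    finally show ?thesis .
  qed
  then have "XX \<le> \<bar>xa\<bar> * (1 + exp B) / \<bar>1 - exp ta\<bar> + exp B * B" using e1 x'b by linarith
  then show False unfolding XX_def by linarith
qed

lemma tc_aux:
  fixes a b c xa xb xh :: real
  assumes "b \<noteq> 0" "a * xb = b * xa" "b * xh = c * xb"
  shows "a * xh = c * xa"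
proof -
  have "b * (a * xh) = a * (b * xh)" by simp
  also have "\<dots> = c * (a * xb)" using assms(3) by simp
  also have "\<dots> = b * (c * xa)" using assms(2) by simp
  finally show ?thesis using assms(1) by simp
qed

lemma comm_iff:
  "sol_mult (x,y,t) (x',y',t') = sol_mult (x',y',t') (x,y,t) \<longleftrightarrow>
    (exp t - 1) * x' = (exp t' - 1) * x \<and> (exp (-t) - 1) * y' = (exp (-t') - 1) * y"
  by (auto simp: sm algebra_simps)

lemma trans_comm:
  assumes "sol_mult a b = sol_mult b a" "sol_mult b h = sol_mult h b"
    "snd (snd a) \<noteq> 0" "snd (snd b) \<noteq> 0"
  shows "sol_mult a h = sol_mult h a"
proof -
  obtain xa ya ta where a: "a = (xa,ya,ta)" by (cases a) auto
  obtain xb yb tb where b: "b = (xb,yb,tb)" by (cases b) auto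
  obtain xh yh th where h: "h = (xh,yh,th)" by (cases h) auto
  have tb: "exp tb - 1 \<noteq> 0" "exp (-tb) - 1 \<noteq> 0" using assms(4) b by auto
  have e1: "(exp ta - 1)*xb = (exp tb - 1)*xa \<and> (exp(-ta)-1)*yb = (exp(-tb)-1)*ya"
    using assms(1) unfolding a b comm_iff .
  have e2: "(exp tb - 1)*xh = (exp th - 1)*xb \<and> (exp(-tb)-1)*yh = (exp(-th)-1)*yb"
    using assms(2) unfolding b h comm_iff .
  show ?thesis unfolding a h comm_iff
    using tc_aux[OF tb(1), of "exp ta - 1" xb xa xh "exp th - 1"]
      tc_aux[OF tb(2), of "exp (-ta) - 1" yb ya yh "exp (-th) - 1"] e1 e2 by simp
qed

lemma triv_comm:
  assumes "sol_mult a b = sol_mult b a" "snd (snd a) \<noteq> 0" "snd (snd b) = 0"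
  shows "b = (0,0,0)"
proof -
  obtain xa ya ta where a: "a = (xa,ya,ta)" by (cases a) auto
  obtain xb yb tb where b: "b = (xb,yb,tb)" by (cases b) auto
  have "exp ta - 1 \<noteq> 0" "exp (-ta) - 1 \<noteq> 0" using assms(2) a by auto
  then show ?thesis using assms(1,3) unfolding a b comm_iff by auto
qed

lemma core:
  assumes comm: "\<forall>a\<in>A. \<forall>b\<in>B. sol_mult a b = sol_mult b a"
    and a0: "a0 \<in> A" "snd (snd a0) \<noteq> 0" and inf: "infinite B"
  shows "\<forall>x\<in>A \<union> B. sol_mult a0 x = sol_mult x a0"
proof -
  have cB: "\<forall>x\<in>B. sol_mult a0 x = sol_mult x a0" using comm a0 by auto
  obtain b0 where b0: "b0 \<in> B" "snd (snd b0) \<noteq> 0"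
  proof (rule ccontr)
    assume "\<not> thesis"
    then have "\<forall>b\<in>B. snd (snd b) = 0" using that by blast
    then have "B \<subseteq> {(0,0,0)}" using triv_comm cB a0(2) by blast
    then show False using inf finite_subset by blast
  qed
  have "\<forall>x\<in>A. sol_mult a0 x = sol_mult x a0"
  proof
    fix x assume "x \<in> A"
    then have "sol_mult b0 x = sol_mult x b0" using comm b0 by auto
    then show "sol_mult a0 x = sol_mult x a0"
      using trans_comm[of a0 b0 x] cB b0 a0 by auto
  qed
  then show ?thesis using cB by auto
qed

lemma comm_mult:
  assumes "sol_mult a x = sol_mult x a" "sol_mult a y = sol_mult y a"
  shows "sol_mult a (sol_mult x y) = sol_mult (sol_mult x y) a"
  by (metis assms sm_assoc)

lemma cover_K:
  assumes K: "compact K" and cov: "(\<Union>g\<in>L. sol_mult g ` K) = UNIV"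
    and fin: "finite (rcosets\<^bsub>Sol3\<lparr>carrier := L\<rparr>\<^esub> H)"
    and H0: "(0,0,0) \<in> H"
  shows "\<exists>K'. compact K' \<and> (\<forall>p. \<exists>h\<in>H. \<exists>k\<in>K'. p = sol_mult h k)"
proof -
  let ?M = "Sol3\<lparr>carrier := L\<rparr>"
  have rc: "\<And>a. H #>\<^bsub>?M\<^esub> a = (\<lambda>h. sol_mult h a) ` H"
    by (auto simp: r_coset_def Sol3_def)
  have rcs: "rcosets\<^bsub>?M\<^esub> H = (\<lambda>a. H #>\<^bsub>?M\<^esub> a) ` L"
    by (auto simp: RCOSETS_def Sol3_def)
  define rep where "rep C = (SOME a. a \<in> L \<and> C = H #>\<^bsub>?M\<^esub> a)" for C
  define R where "R = rep ` (rcosets\<^bsub>?M\<^esub> H)"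
  define K' where "K' = (\<Union>r\<in>R. sol_mult r ` K)"
  have "finite R" using fin unfolding R_def by simp
  moreover have "\<And>r. compact (sol_mult r ` K)"
    using compact_continuous_image[OF continuous_on_subset[OF sm_cont] K] by auto
  ultimately have "compact K'" unfolding K'_def by (intro compact_UN) auto
  moreover have "\<forall>p. \<exists>h\<in>H. \<exists>k\<in>K'. p = sol_mult h k"
  proof
    fix p
    obtain g k where gk: "g \<in> L" "k \<in> K" "p = sol_mult g k" using cov by blast
    define C where "C = H #>\<^bsub>?M\<^esub> g"
    have C: "C \<in> rcosets\<^bsub>?M\<^esub> H" using gk(1) rcs C_def by auto
    have "\<exists>a. a \<in> L \<and> C = H #>\<^bsub>?M\<^esub> a" using gk(1) C_def by blast
    then have r: "rep C \<in> L \<and> C = H #>\<^bsub>?M\<^esub> rep C"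
      unfolding rep_def by (rule someI_ex)
    have "g = sol_mult (0,0,0) g" by (cases g) (simp add: sm)
    then have "g \<in> C" using H0 unfolding C_def rc by auto
    then have "g \<in> (\<lambda>h. sol_mult h (rep C)) ` H" using r rc by simp
    then obtain h where h: "h \<in> H" "g = sol_mult h (rep C)" by blast
    have "p = sol_mult h (sol_mult (rep C) k)" using gk(3) h(2) sm_assoc by simp
    moreover have "sol_mult (rep C) k \<in> K'" unfolding K'_def R_def using C gk(2) by auto
    ultimately show "\<exists>h\<in>H. \<exists>k\<in>K'. p = sol_mult h k" using h(1) by blast
  qed
  ultimately show ?thesis by blast
qed

theorem corollary3p7:
  fixes L :: "(real \<times> real \<times> real) set"
  assumes "cocompact_lattice L"
  shows "infinite L \<and>
    (\<forall>(G1 :: 'a monoid) (G2 :: 'b monoid) \<phi>.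
        group G1 \<and> group G2 \<and> \<phi> \<in> hom (G1 \<times>\<times> G2) (Sol3\<lparr>carrier := L\<rparr>) \<and>
        finite_index (Sol3\<lparr>carrier := L\<rparr>) (\<phi> ` carrier (G1 \<times>\<times> G2))
      \<longrightarrow> finite (\<phi> ` ((\<lambda>g. (g, \<one>\<^bsub>G2\<^esub>)) ` carrier G1)) \<or>
          finite (\<phi> ` ((\<lambda>h. (\<one>\<^bsub>G1\<^esub>, h)) ` carrier G2)))"
proof -
  obtain K where K: "compact K" and cov: "(\<Union>g\<in>L. sol_mult g ` K) = UNIV"
    using assms unfolding cocompact_lattice_def by blast
  have cK: "\<And>g. compact (sol_mult g ` K)"
    using compact_continuous_image[OF continuous_on_subset[OF sm_cont] K] by auto
  have infL: "infinite L"
  proof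
    assume "finite L"
    then have "compact (\<Union>g\<in>L. sol_mult g ` K)" using cK by (intro compact_UN) auto
    then have "bounded (UNIV :: (real \<times> real \<times> real) set)" using cov compact_imp_bounded by metis
    then show False by simp
  qed
  have main: "finite (\<phi> ` ((\<lambda>g. (g, \<one>\<^bsub>G2\<^esub>)) ` carrier G1)) \<or>
          finite (\<phi> ` ((\<lambda>h. (\<one>\<^bsub>G1\<^esub>, h)) ` carrier G2))"
    if G1: "group G1" and G2: "group G2" and hom: "\<phi> \<in> hom (G1 \<times>\<times> G2) (Sol3\<lparr>carrier := L\<rparr>)"
      and fi: "finite_index (Sol3\<lparr>carrier := L\<rparr>) (\<phi> ` carrier (G1 \<times>\<times> G2))"
    for G1 :: "'a monoid" and G2 :: "'b monoid" and \<phi>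
  proof (rule ccontr)
    assume "\<not> ?thesis"
    then have inf1: "infinite (\<phi> ` ((\<lambda>g. (g, \<one>\<^bsub>G2\<^esub>)) ` carrier G1))"
      and inf2: "infinite (\<phi> ` ((\<lambda>h. (\<one>\<^bsub>G1\<^esub>, h)) ` carrier G2))" by auto
    define A where "A = \<phi> ` ((\<lambda>g. (g, \<one>\<^bsub>G2\<^esub>)) ` carrier G1)"
    define B where "B = \<phi> ` ((\<lambda>h. (\<one>\<^bsub>G1\<^esub>, h)) ` carrier G2)"
    define H where "H = \<phi> ` carrier (G1 \<times>\<times> G2)"
    have hm: "\<phi> (x \<otimes>\<^bsub>G1 \<times>\<times> G2\<^esub> y) = sol_mult (\<phi> x) (\<phi> y)"
      if "x \<in> carrier (G1 \<times>\<times> G2)" "y \<in> carrier (G1 \<times>\<times> G2)" for x y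
      using hom that unfolding hom_def by (cases x; cases y) (auto simp: Sol3_def)
    have 11: "\<one>\<^bsub>G1\<^esub> \<in> carrier G1" "\<one>\<^bsub>G2\<^esub> \<in> carrier G2"
      using G1 G2 by (auto intro: monoid.one_closed group.is_monoid)
    have dec: "\<phi> (g, h) = sol_mult (\<phi> (g, \<one>\<^bsub>G2\<^esub>)) (\<phi> (\<one>\<^bsub>G1\<^esub>, h))
       \<and> \<phi> (g, h) = sol_mult (\<phi> (\<one>\<^bsub>G1\<^esub>, h)) (\<phi> (g, \<one>\<^bsub>G2\<^esub>))"
      if "g \<in> carrier G1" "h \<in> carrier G2" for g h
    proof -
      have a: "(g, h) = (g, \<one>\<^bsub>G2\<^esub>) \<otimes>\<^bsub>G1 \<times>\<times> G2\<^esub> (\<one>\<^bsub>G1\<^esub>, h)"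
        using that G1 G2 by (simp add: group.is_monoid monoid.l_one monoid.r_one)
      have b: "(g, h) = (\<one>\<^bsub>G1\<^esub>, h) \<otimes>\<^bsub>G1 \<times>\<times> G2\<^esub> (g, \<one>\<^bsub>G2\<^esub>)"
        using that G1 G2 by (simp add: group.is_monoid monoid.l_one monoid.r_one)
      show ?thesis using hm that 11 a b by (metis SigmaI carrier_DirProd)
    qed
    have comm: "\<forall>a\<in>A. \<forall>b\<in>B. sol_mult a b = sol_mult b a"
    proof (intro ballI)
      fix a b assume "a \<in> A" "b \<in> B"
      then obtain g h where gh: "g \<in> carrier G1" "h \<in> carrier G2"
        "a = \<phi> (g, \<one>\<^bsub>G2\<^esub>)" "b = \<phi> (\<one>\<^bsub>G1\<^esub>, h)"
        unfolding A_def B_def by auto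
      show "sol_mult a b = sol_mult b a" using dec[OF gh(1,2)] gh(3,4) by metis
    qed
    have H0: "(0,0,0) \<in> H"
    proof -
      have "\<phi> (\<one>\<^bsub>G1\<^esub>, \<one>\<^bsub>G2\<^esub>) = sol_mult (\<phi> (\<one>\<^bsub>G1\<^esub>, \<one>\<^bsub>G2\<^esub>)) (\<phi> (\<one>\<^bsub>G1\<^esub>, \<one>\<^bsub>G2\<^esub>))"
        using dec 11 by blast
      then have "\<phi> (\<one>\<^bsub>G1\<^esub>, \<one>\<^bsub>G2\<^esub>) = (0,0,0)" using sm_idem by metis
      then show ?thesis unfolding H_def using 11 by force
    qed
    obtain K' where K': "compact K'" "\<forall>p. \<exists>h\<in>H. \<exists>k\<in>K'. p = sol_mult h k"
      using cover_K[OF K cov _ H0] fi unfolding finite_index_def H_def by blast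
    have Hdec: "\<forall>x\<in>H. \<exists>a\<in>A. \<exists>b\<in>B. x = sol_mult a b"
      unfolding H_def A_def B_def using dec by fastforce
    show False
    proof (cases "\<forall>x\<in>H. snd (snd x) = 0")
      case True
      then show False using no_cover_N[OF K'(1) True K'(2)] by blast
    next
      case False
      then obtain x where x: "x \<in> H" "snd (snd x) \<noteq> 0" by blast
      then obtain a b where ab: "a \<in> A" "b \<in> B" "x = sol_mult a b" using Hdec by blast
      have disj: "snd (snd a) \<noteq> 0 \<or> snd (snd b) \<noteq> 0" using x(2) ab(3) sm_t by auto
      have "\<exists>a0. snd (snd a0) \<noteq> 0 \<and> (\<forall>y\<in>A \<union> B. sol_mult a0 y = sol_mult y a0)"
      proof (cases "snd (snd a) \<noteq> 0")
        case True
        then show ?thesis using core[OF comm ab(1) True inf2[folded B_def]] by blast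
      next
        case False
        then have bb: "snd (snd b) \<noteq> 0" using disj by simp
        have c2: "\<forall>b\<in>B. \<forall>a\<in>A. sol_mult b a = sol_mult a b" using comm by auto
        have "\<forall>y\<in>B \<union> A. sol_mult b y = sol_mult y b"
          using core[OF c2 ab(2) bb inf1[folded A_def]] .
        then have "\<forall>y\<in>A \<union> B. sol_mult b y = sol_mult y b" by blast
        then show ?thesis using bb by blast
      qed
      then obtain a0 where a0: "snd (snd a0) \<noteq> 0"
        and ca: "\<forall>y\<in>A \<union> B. sol_mult a0 y = sol_mult y a0" by blast
      have "\<forall>h\<in>H. sol_mult a0 h = sol_mult h a0"
      proof
        fix h assume "h \<in> H"
        then obtain a' b' where "a' \<in> A" "b' \<in> B" "h = sol_mult a' b'" using Hdec by blast
        then show "sol_mult a0 h = sol_mult h a0" using ca comm_mult[of a0 a' b'] by blast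
      qed
      then show False using no_cover_C[OF K'(1) a0 _ K'(2)] by blast
    qed
  qed
  show ?thesis
    apply (intro conjI allI impI)
     apply (rule infL)
    apply (elim conjE)
    apply (rule main)
       apply assumption+
    done
qed

end
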